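(* Let $\mathcal G_c$ be the colored union graph of a switched system $(A_k,B_k)_{k=1}^N$ and $X_s\subseteq X$. (1) If $\mathcal G_c$ contains a generalized stem that covers $X_s$, then there is a generalized cactus walking whose head is $X_s$. (2) If $\mathcal G_c$ contains a generalized bud that covers $X_s$, then there is a generalized cactus walking whose head is $X_s$, and the length of the shortest walk in it can be arbitrarily large (i.e., for every $M\in\mathbb N$ there is such a generalized cactus walking all of whose walks have length at least $M$).
   Context: Setting: subsystems $(A_k,B_k)$, $A_k\in\mathbb{R}^{n\times n}$ (or structured), $B_k$ of size $n\times m_k$, $k\in[N]=\{1,\dots,N\}$; $A_k(p,j)$, $B_l(q,j)$ denote entries. Colored union graph $\mathcal G_c$: vertices $X=\{x_1,\dots,x_n\}$ and $U=\bigcup_kU_k$, $U_k=\{u^k_1,\dots,u^k_{m_k}\}$; for each $k$ and each nonzero $A_k(j,q)$ a state edge $(x_q,x_j)$ with color index $k$ (parallel edges of different colors allowed); for each nonzero $B_k(j,q)$ an input edge $(u^k_q,x_j)$ with color index $k$. A state vertex is input-reachable if some path from a vertex of $U$ reaches it. Edges are S-disjoint if their heads are all distinct and edges having the same tail have different color indices. A cycle is a closed walk whose only repeated vertex is its start/end (self-loops allowed). A subgraph covers $X_s$ if its vertex set contains $X_s$. Generalized stem: a subgraph $(V_s,E_s)$ of $\mathcal G_c$ with exactly one input vertex in $V_s$ and no cycle, in which each state vertex of $V_s$ has exactly one ingoing edge in $E_s$, and whose edges are S-disjoint. Generalized bud: a subgraph $(V_s,E_s)$ with no input vertex and exactly one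 cycle, every state vertex of which is input-reachable in $\mathcal G_c$, each state vertex of $V_s$ having exactly one ingoing edge in $E_s$, and whose edges are S-disjoint. Multi-layer dynamic graph $\hat{\mathcal G}_{\bar l}$: layers $0,\dots,\bar l$. Layer 0: $\hat X_0=\{x^{00}_{p0}:p\in[n]\}$, $\hat U_0=\{u^{00}_{k,j0}: j\in[N],k\in[m_j]\}$, edges $(u^{00}_{k,j0},x^{00}_{q0})$ when $B_j(q,k)\ne0$. Layer $i\ge1$: $\hat X_i=\{x^{kt}_{ji}: j\in[n],k\in[N],t\in[N^{i-1}]\}$, $\hat U_i=\{u^{kt}_{j,li}: k,l\in[N],j\in[m_l],t\in[N^{i-1}]\}$, edges $(u^{kt}_{j,li},x^{kt}_{qi})$ when $B_l(q,j)\ne0$. Edges $(x^{k1}_{j1},x^{00}_{p0})$ when $A_k(p,j)\ne0$; for $i\ge 2$, edges $(x^{kt}_{ji},x^{k't'}_{p,i-1})$ when $A_k(p,j)\ne0$, for $k,k'\in[N]$, $t'\in[N^{i-2}]$, $t=(k'-1)N^{i-2}+t'$. An input-state walk is a walk in $\mathcal G_c$ from a vertex of $U$ to a vertex of $X$. For such a walk $p$ of length $k$ with edge colors $i_1,\dots,i_k$ passing through $u^{i_1}_{j_1},x_{j_2},\dots,x_{j_{k+1}}$, its MDG-path $\hat p$ is the unique path in $\hat{\mathcal G}_{\bar l}$ ($\bar l\ge k$) of the form $(u^{i_2,\bullet}_{j_1,i_1,k-1},x^{i_2,\bullet}_{j_2,k-1},x^{i_3,\bullet}_{j_3,k-2},\dots,x^{i_k,1}_{j_k,1},x^{00}_{j_{k+1},0})$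 with copy indices $\bullet$ forced by the edge structure (for $k=1$: $(u^{00}_{j_1,i_10},x^{00}_{j_2,0})$). A collection of input-state walks $\{p_1,\dots,p_k\}$ is a generalized cactus walking if their MDG-paths $\hat p_1,\dots,\hat p_k$ are pairwise vertex-disjoint in $\hat{\mathcal G}_{\bar l}$ with $\bar l\ge\max_i|p_i|$; its head is the set of heads of its walks. *)

theory Defs
  imports Complex_Main
begin

text \<open>Subsystems are indexed by k in {1..N}; state indices by {1..n}; the inputs of
  subsystem k by {1..m k}.  A k p j is the entry (p,j) of A_k and B k q j is the entry
  (q,j) of B_k.\<close>

datatype vert = X nat | U nat nat  \<comment> \<open>X j = x_j;  U k q = u^k_q (input q of subsystem k)\<close>

type_synonym cedge = "vert \<times> nat \<times> vert"  \<comment> \<open>(tail, color index, head)\<close>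

definition Xset :: "nat \<Rightarrow> vert set" where
  "Xset n = {X j | j. j \<in> {1..n}}"

definition Uset :: "nat \<Rightarrow> (nat \<Rightarrow> nat) \<Rightarrow> vert set" where
  "Uset N m = {U k q | k q. k \<in> {1..N} \<and> q \<in> {1..m k}}"

definition gc_V :: "nat \<Rightarrow> nat \<Rightarrow> (nat \<Rightarrow> nat) \<Rightarrow> vert set" where
  "gc_V n N m = Xset n \<union> Uset N m"

definition gc_E :: "nat \<Rightarrow> nat \<Rightarrow> (nat \<Rightarrow> nat)
    \<Rightarrow> (nat \<Rightarrow> nat \<Rightarrow> nat \<Rightarrow> real) \<Rightarrow> (nat \<Rightarrow> nat \<Rightarrow> nat \<Rightarrow> real) \<Rightarrow> cedge set" where
  "gc_E n N m A B =
     {(X q, k, X j) | k j q. k \<in> {1..N} \<and> j \<in> {1..n} \<and> q \<in> {1..n} \<and> A k j q \<noteq> 0}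
   \<union> {(U k q, k, X j) | k j q. k \<in> {1..N} \<and> j \<in> {1..n} \<and> q \<in> {1..m k} \<and> B k j q \<noteq> 0}"

definition tl_of :: "cedge \<Rightarrow> vert" where "tl_of e = fst e"
definition col_of :: "cedge \<Rightarrow> nat" where "col_of e = fst (snd e)"
definition hd_of :: "cedge \<Rightarrow> vert" where "hd_of e = snd (snd e)"

text \<open>A walk is a start vertex together with the list of steps (color of the edge, next vertex).\<close>

type_synonym walk = "vert \<times> (nat \<times> vert) list"

fun is_walk :: "cedge set \<Rightarrow> vert \<Rightarrow> (nat \<times> vert) list \<Rightarrow> bool" where
  "is_walk E v [] = True"
| "is_walk E v ((c, w) # rest) = ((v, c, w) \<in> E \<and> is_walk E w rest)"

fun walk_edges :: "vert \<Rightarrow> (nat \<times> vert) list \<Rightarrow> cedge set" where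
  "walk_edges v [] = {}"
| "walk_edges v ((c, w) # rest) = insert (v, c, w) (walk_edges w rest)"

definition is_path :: "cedge set \<Rightarrow> vert \<Rightarrow> (nat \<times> vert) list \<Rightarrow> bool" where
  "is_path E v es = (is_walk E v es \<and> distinct (v # map snd es))"

definition is_cycle :: "cedge set \<Rightarrow> vert \<Rightarrow> (nat \<times> vert) list \<Rightarrow> bool" where
  "is_cycle E v es = (es \<noteq> [] \<and> is_walk E v es \<and> snd (last es) = v \<and> distinct (map snd es))"

text \<open>Cycles are identified up to the choice of starting point, i.e. by their edge sets.\<close>
definition cycles :: "cedge set \<Rightarrow> cedge set set" where
  "cycles E = {walk_edges v es | v es. is_cycle E v es}"

definition input_reachable :: "nat \<Rightarrow> nat \<Rightarrow> (nat \<Rightarrow> nat)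
    \<Rightarrow> (nat \<Rightarrow> nat \<Rightarrow> nat \<Rightarrow> real) \<Rightarrow> (nat \<Rightarrow> nat \<Rightarrow> nat \<Rightarrow> real) \<Rightarrow> vert \<Rightarrow> bool" where
  "input_reachable n N m A B x =
     (\<exists>u es. u \<in> Uset N m \<and> es \<noteq> [] \<and> is_path (gc_E n N m A B) u es \<and> snd (last es) = x)"

definition is_subgraph :: "vert set \<Rightarrow> cedge set \<Rightarrow> vert set \<Rightarrow> cedge set \<Rightarrow> bool" where
  "is_subgraph V E Vs Es = (Vs \<subseteq> V \<and> Es \<subseteq> E \<and> (\<forall>e\<in>Es. tl_of e \<in> Vs \<and> hd_of e \<in> Vs))"

definition S_disjoint :: "cedge set \<Rightarrow> bool" where
  "S_disjoint Es = (\<forall>e1\<in>Es. \<forall>e2\<in>Es. e1 \<noteq> e2 \<longrightarrow>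
      hd_of e1 \<noteq> hd_of e2 \<and> (tl_of e1 = tl_of e2 \<longrightarrow> col_of e1 \<noteq> col_of e2))"

definition one_ingoing :: "nat \<Rightarrow> vert set \<Rightarrow> cedge set \<Rightarrow> bool" where
  "one_ingoing n Vs Es = (\<forall>x\<in>Vs \<inter> Xset n. card {e\<in>Es. hd_of e = x} = 1)"

definition gen_stem :: "nat \<Rightarrow> nat \<Rightarrow> (nat \<Rightarrow> nat)
    \<Rightarrow> (nat \<Rightarrow> nat \<Rightarrow> nat \<Rightarrow> real) \<Rightarrow> (nat \<Rightarrow> nat \<Rightarrow> nat \<Rightarrow> real)
    \<Rightarrow> vert set \<Rightarrow> cedge set \<Rightarrow> bool" where
  "gen_stem n N m A B Vs Es =
     (is_subgraph (gc_V n N m) (gc_E n N m A B) Vs Es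
      \<and> card (Vs \<inter> Uset N m) = 1
      \<and> cycles Es = {}
      \<and> one_ingoing n Vs Es
      \<and> S_disjoint Es)"

definition gen_bud :: "nat \<Rightarrow> nat \<Rightarrow> (nat \<Rightarrow> nat)
    \<Rightarrow> (nat \<Rightarrow> nat \<Rightarrow> nat \<Rightarrow> real) \<Rightarrow> (nat \<Rightarrow> nat \<Rightarrow> nat \<Rightarrow> real)
    \<Rightarrow> vert set \<Rightarrow> cedge set \<Rightarrow> bool" where
  "gen_bud n N m A B Vs Es =
     (is_subgraph (gc_V n N m) (gc_E n N m A B) Vs Es
      \<and> Vs \<inter> Uset N m = {}
      \<and> (\<exists>!C. C \<in> cycles Es)
      \<and> (\<forall>x\<in>Vs \<inter> Xset n. input_reachable n N m A B x)
      \<and> one_ingoing n Vs Es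
      \<and> S_disjoint Es)"

text \<open>MX j k t i = x^{kt}_{j i};  MU j l k t i = u^{kt}_{j,l i}.  Layer-0 vertices have k = t = 0.\<close>
datatype mvert = MX nat nat nat nat | MU nat nat nat nat nat

text \<open>Copy index of a vertex in layer i \<ge> 1, given the colors of the vertices of the
  path in layers i-1, ..., 1 (in this order): t = 1 in layer 1, and
  t = (k'-1) N^(i-2) + t' in layer i \<ge> 2.\<close>
fun copy_idx :: "nat \<Rightarrow> nat list \<Rightarrow> nat" where
  "copy_idx N [] = 1"
| "copy_idx N (d # ds) = (d - 1) * N ^ length ds + copy_idx N ds"

fun xidx :: "vert \<Rightarrow> nat" where
  "xidx (X j) = j"
| "xidx (U k q) = 0"

text \<open>MDG images of the state vertices of a walk; argument is the suffix of the step list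
  starting at the edge entering the vertex.\<close>
fun mdg_states :: "nat \<Rightarrow> (nat \<times> vert) list \<Rightarrow> mvert list" where
  "mdg_states N [] = []"
| "mdg_states N ((c, w) # rest) =
     (if rest = [] then MX (xidx w) 0 0 0
      else MX (xidx w) (fst (hd rest)) (copy_idx N (map fst (tl rest))) (length rest))
     # mdg_states N rest"

fun mdg_input :: "nat \<Rightarrow> vert \<Rightarrow> (nat \<times> vert) list \<Rightarrow> mvert" where
  "mdg_input N (U l j) ((c, w) # rest) =
     (if rest = [] then MU j c 0 0 0
      else MU j c (fst (hd rest)) (copy_idx N (map fst (tl rest))) (length rest))"
| "mdg_input N v es = MU 0 0 0 0 0"

definition mdg_path :: "nat \<Rightarrow> walk \<Rightarrow> mvert list" where
  "mdg_path N p = mdg_input N (fst p) (snd p) # mdg_states N (snd p)"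

definition input_state_walk :: "nat \<Rightarrow> nat \<Rightarrow> (nat \<Rightarrow> nat)
    \<Rightarrow> (nat \<Rightarrow> nat \<Rightarrow> nat \<Rightarrow> real) \<Rightarrow> (nat \<Rightarrow> nat \<Rightarrow> nat \<Rightarrow> real) \<Rightarrow> walk \<Rightarrow> bool" where
  "input_state_walk n N m A B p =
     (fst p \<in> Uset N m \<and> snd p \<noteq> [] \<and> is_walk (gc_E n N m A B) (fst p) (snd p)
      \<and> snd (last (snd p)) \<in> Xset n)"

definition walk_len :: "walk \<Rightarrow> nat" where "walk_len p = length (snd p)"

definition walk_head :: "walk \<Rightarrow> vert" where "walk_head p = snd (last (snd p))"

definition gen_cactus_walking :: "nat \<Rightarrow> nat \<Rightarrow> (nat \<Rightarrow> nat)
    \<Rightarrow> (nat \<Rightarrow> nat \<Rightarrow> nat \<Rightarrow> real) \<Rightarrow> (nat \<Rightarrow> nat \<Rightarrow> nat \<Rightarrow> real) \<Rightarrow> walk set \<Rightarrow> bool" where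
  "gen_cactus_walking n N m A B P =
     (finite P \<and> (\<forall>p\<in>P. input_state_walk n N m A B p)
      \<and> (\<forall>p\<in>P. \<forall>q\<in>P. p \<noteq> q \<longrightarrow> set (mdg_path N p) \<inter> set (mdg_path N q) = {}))"

end

theory Submission
  imports Defs
begin


lemma is_walk_append:
  "is_walk E s (xs @ ys) = (is_walk E s xs \<and> is_walk E (last (s # map snd xs)) ys)"
proof (induction xs arbitrary: s)
  case Nil then show ?case by simp
next
  case (Cons a xs) then show ?case by (cases a) auto
qed

lemma is_walk_mono: "is_walk E s es \<Longrightarrow> E \<subseteq> E' \<Longrightarrow> is_walk E' s es"
  by (induction E s es rule: is_walk.induct) auto

lemma walk_take: "is_walk E s es \<Longrightarrow> is_walk E s (take j es)"
  by (metis append_take_drop_id is_walk_append)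

lemma walk_drop:
  "is_walk E s es \<Longrightarrow> i \<le> length es \<Longrightarrow> is_walk E ((s # map snd es) ! i) (drop i es)"
proof (induction es arbitrary: s i)
  case Nil then show ?case by simp
next
  case (Cons a r)
  obtain c w where a: "a = (c, w)" by (cases a)
  show ?case
  proof (cases i)
    case 0 then show ?thesis using Cons.prems by simp
  next
    case (Suc j)
    then show ?thesis using Cons.prems Cons.IH[of w j] a by simp
  qed
qed

lemma last_drop:
  "i \<le> length es \<Longrightarrow> last ((s # map snd es) ! i # map snd (drop i es)) = last (s # map snd es)"
proof (induction es arbitrary: s i)
  case Nil then show ?case by simp
next
  case (Cons a r)
  obtain c w where a: "a = (c, w)" by (cases a)
  show ?case
  proof (cases i)
    case 0 then show ?thesis by simp
  next
    case (Suc j)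
    then show ?thesis using Cons.prems Cons.IH[of j w] a by simp
  qed
qed

lemma det_walk:
  assumes "\<And>a c b b'. (a,c,b) \<in> E \<Longrightarrow> (a,c,b') \<in> E \<Longrightarrow> b = b'"
  shows "is_walk E w r1 \<Longrightarrow> is_walk E w r2 \<Longrightarrow> map fst r1 = map fst r2 \<Longrightarrow> r1 = r2"
proof (induction r1 arbitrary: w r2)
  case Nil then show ?case by simp
next
  case (Cons a r)
  obtain c w1 where a: "a = (c, w1)" by (cases a)
  obtain b r2' where r2: "r2 = b # r2'" using Cons.prems by (cases r2) auto
  obtain c' w2 where b: "b = (c', w2)" by (cases b)
  have cc: "c = c'" "map fst r = map fst r2'" using Cons.prems a r2 b by auto
  have "w1 = w2" using Cons.prems a r2 b cc assms by auto
  then show ?case using Cons.IH[of w1 r2'] Cons.prems a r2 b cc by auto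
qed

lemma walk_edges_hd: "e \<in> walk_edges v es \<Longrightarrow> hd_of e \<in> set (map snd es)"
  by (induction v es rule: walk_edges.induct) (auto simp: hd_of_def)

lemma snd_last: "es \<noteq> [] \<Longrightarrow> snd (last es) = last (s # map snd es)"
  by (simp add: last_map)

lemma funpow_comm: "(f^^a) ((f^^b) x) = (f^^b) ((f^^a) x)"
  by (metis add.commute comp_apply funpow_add)

lemma funpow_add_apply: "(f^^(a+b)) x = (f^^a) ((f^^b) x)"
  by (simp add: funpow_add)

fun bw :: "(vert \<Rightarrow> vert) \<Rightarrow> (vert \<Rightarrow> nat) \<Rightarrow> nat \<Rightarrow> vert \<Rightarrow> (nat \<times> vert) list" where
  "bw f c 0 x = []"
| "bw f c (Suc j) x = (c ((f^^j) x), (f^^j) x) # bw f c j x"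

lemma bw_len: "length (bw f c j x) = j" by (induction j) auto

lemma bw_walk:
  "(\<And>y. y \<in> S \<Longrightarrow> (f y, c y, y) \<in> E) \<Longrightarrow> (\<And>t. t < j \<Longrightarrow> (f^^t) x \<in> S)
   \<Longrightarrow> is_walk E ((f^^j) x) (bw f c j x)"
  by (induction j) auto

lemma bw_set: "set (map snd (bw f c j x)) = {(f^^t) x | t. t < j}"
  by (induction j) (auto simp: less_Suc_eq)

lemma bw_endv: "last ((f^^j) x # map snd (bw f c j x)) = x"
  by (induction j) auto

lemma bw_distinct:
  "(\<And>s t. s < j \<Longrightarrow> t < j \<Longrightarrow> (f^^s) x = (f^^t) x \<Longrightarrow> s = t) \<Longrightarrow> distinct (map snd (bw f c j x))"
proof (induction j)
  case 0 then show ?case by simp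
next
  case (Suc j)
  have "(f^^j) x \<notin> set (map snd (bw f c j x))"
  proof
    assume "(f^^j) x \<in> set (map snd (bw f c j x))"
    then obtain t where t: "t < j" "(f^^j) x = (f^^t) x" unfolding bw_set by blast
    then have "j = t" using Suc.prems[of j t] by simp
    then show False using t by simp
  qed
  moreover have "distinct (map snd (bw f c j x))" using Suc by auto
  ultimately show ?case by simp
qed

lemma bw_edge: "0 < j \<Longrightarrow> (f x, c x, x) \<in> walk_edges ((f^^j) x) (bw f c j x)"
proof (induction j)
  case 0 then show ?case by simp
next
  case (Suc j)
  then show ?case by (cases j) auto
qed

lemma periodic_cycle:
  assumes hE: "\<And>y. y \<in> S \<Longrightarrow> (f y, c y, y) \<in> E" and p: "0 < p" "(f^^p) z = z"
    and inS: "\<And>t. t < p \<Longrightarrow> (f^^t) z \<in> S"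
  shows "\<exists>C \<in> cycles E. (f z, c z, z) \<in> C \<and> (\<forall>e\<in>C. \<exists>t<p. hd_of e = (f^^t) z)"
proof -
  define q where "q = (LEAST q. 0 < q \<and> (f^^q) z = z)"
  have q: "0 < q \<and> (f^^q) z = z" unfolding q_def by (rule LeastI[of _ p]) (use p in auto)
  have qp: "q \<le> p" unfolding q_def by (rule Least_le) (use p in auto)
  have qmin: "\<And>t. 0 < t \<Longrightarrow> t < q \<Longrightarrow> (f^^t) z \<noteq> z"
    unfolding q_def using not_less_Least by blast
  have aux: "\<And>s t. s < t \<Longrightarrow> t < q \<Longrightarrow> (f^^s) z \<noteq> (f^^t) z"
  proof
    fix s t assume st: "s < t" "t < q" "(f^^s) z = (f^^t) z"
    have "(f^^(q - t + s)) z = (f^^(q - t)) ((f^^s) z)" by (rule funpow_add_apply)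
    also have "\<dots> = (f^^(q - t)) ((f^^t) z)" using st by simp
    also have "\<dots> = (f^^(q - t + t)) z" by (rule funpow_add_apply[symmetric])
    also have "\<dots> = z" using st q by simp
    finally have "(f^^(q - t + s)) z = z" .
    moreover have "0 < q - t + s" "q - t + s < q" using st by auto
    ultimately show False using qmin[of "q - t + s"] by simp
  qed
  have inj: "\<And>s t. s < q \<Longrightarrow> t < q \<Longrightarrow> (f^^s) z = (f^^t) z \<Longrightarrow> s = t"
  proof -
    fix s t assume "s < q" "t < q" "(f^^s) z = (f^^t) z"
    then have "\<not> s < t" "\<not> t < s" using aux[of s t] aux[of t s] by auto
    then show "s = t" by simp
  qed
  define es where "es = bw f c q z"
  have walk: "is_walk E z es"
    using bw_walk[of S f c E q z] hE inS qp q unfolding es_def by auto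
  have ne: "es \<noteq> []" using q bw_len[of f c q z] unfolding es_def by auto
  have lst: "snd (last es) = z"
    using snd_last[OF ne, of z] bw_endv[where f=f and j=q and x=z and c=c] q unfolding es_def by simp
  have dist: "distinct (map snd es)" unfolding es_def by (rule bw_distinct) (use inj in auto)
  have cyc: "is_cycle E z es" using walk ne lst dist by (simp add: is_cycle_def)
  define C where "C = walk_edges z es"
  have C: "C \<in> cycles E" unfolding cycles_def C_def using cyc by blast
  have e1: "(f z, c z, z) \<in> C" unfolding C_def es_def using bw_edge[where f=f and j=q and x=z and c=c] q
    by simp
  have e2: "\<forall>e\<in>C. \<exists>t<p. hd_of e = (f^^t) z"
  proof
    fix e assume "e \<in> C"
    then have "hd_of e \<in> set (map snd es)" unfolding C_def by (rule walk_edges_hd)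
    then obtain t where "t < q" "hd_of e = (f^^t) z" unfolding es_def bw_set by blast
    then show "\<exists>t<p. hd_of e = (f^^t) z" using qp by (intro exI[of _ t]) auto
  qed
  show ?thesis using C e1 e2 by blast
qed

lemma pigeon:
  assumes "finite S" "\<And>t. t \<le> card S \<Longrightarrow> (f^^t) x \<in> S"
  shows "\<exists>a b. a < b \<and> b \<le> card S \<and> (f^^a) x = (f^^b) x"
proof (rule ccontr)
  assume "\<not> ?thesis"
  then have "inj_on (\<lambda>t. (f^^t) x) {0..card S}"
    unfolding inj_on_def by (metis atLeastAtMost_iff linorder_neqE_nat)
  moreover have "(\<lambda>t. (f^^t) x) ` {0..card S} \<subseteq> S" using assms(2) by auto
  ultimately have "card {0..card S} \<le> card S" using card_inj_on_le assms(1) by blast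
  then show False by simp
qed



lemma copy_idx_bound: "set ds \<subseteq> {1..N} \<Longrightarrow> 1 \<le> copy_idx N ds \<and> copy_idx N ds \<le> N ^ length ds"
proof (induction ds)
  case Nil then show ?case by simp
next
  case (Cons d ds)
  let ?B = "N ^ length ds"
  have d: "1 \<le> d" "d \<le> N" using Cons.prems by auto
  have c: "1 \<le> copy_idx N ds" "copy_idx N ds \<le> ?B" using Cons by auto
  have "(d - 1) * ?B + copy_idx N ds \<le> (d - 1) * ?B + ?B" using c by simp
  also have "\<dots> = d * ?B" using d by (cases d) auto
  also have "\<dots> \<le> N * ?B" using d by (simp add: mult_right_mono)
  finally show ?case using c by simp
qed

lemma divmod_uniq: "(a::nat) * B + r = a' * B + r' \<Longrightarrow> r < B \<Longrightarrow> r' < B \<Longrightarrow> a = a' \<and> r = r'"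
proof -
  assume h: "a * B + r = a' * B + r'" "r < B" "r' < B"
  have "(a * B + r) div B = a" using h(2) by simp
  moreover have "(a' * B + r') div B = a'" using h(3) by simp
  moreover have "(a * B + r) mod B = r" using h(2) by simp
  moreover have "(a' * B + r') mod B = r'" using h(3) by simp
  ultimately show ?thesis using h(1) by metis
qed

lemma copy_idx_inj:
  "set ds \<subseteq> {1..N} \<Longrightarrow> set ds' \<subseteq> {1..N} \<Longrightarrow> length ds = length ds'
   \<Longrightarrow> copy_idx N ds = copy_idx N ds' \<Longrightarrow> ds = ds'"
proof (induction ds arbitrary: ds')
  case Nil then show ?case by simp
next
  case (Cons d ds)
  obtain d' ds2 where ds': "ds' = d' # ds2" using Cons.prems by (cases ds') auto
  let ?B = "N ^ length ds"
  have len: "length ds2 = length ds" using Cons.prems ds' by simp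
  have d: "1 \<le> d" "1 \<le> d'" using Cons.prems ds' by auto
  have c: "1 \<le> copy_idx N ds" "copy_idx N ds \<le> ?B" using copy_idx_bound[of ds N] Cons.prems by auto
  have c': "1 \<le> copy_idx N ds2" "copy_idx N ds2 \<le> ?B"
    using copy_idx_bound[of ds2 N] Cons.prems ds' len by auto
  have "(d - 1) * ?B + copy_idx N ds = (d' - 1) * ?B + copy_idx N ds2"
    using Cons.prems ds' len by simp
  then have "(d - 1) * ?B + (copy_idx N ds - 1) = (d' - 1) * ?B + (copy_idx N ds2 - 1)"
    using c c' by simp
  then have "d - 1 = d' - 1 \<and> copy_idx N ds - 1 = copy_idx N ds2 - 1"
    using c c' by (intro divmod_uniq) auto
  then have "d = d'" "copy_idx N ds = copy_idx N ds2" using d c c' by auto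
  moreover have "ds = ds2" using Cons.IH[of ds2] Cons.prems ds' len calculation by auto
  ultimately show ?case using ds' by simp
qed

lemma tail_code_inj:
  assumes "set (map fst r) \<subseteq> {1..N}" "set (map fst r') \<subseteq> {1..N}"
    and "r \<noteq> []" "r' \<noteq> []"
    and "fst (hd r) = fst (hd r')" "copy_idx N (map fst (tl r)) = copy_idx N (map fst (tl r'))"
    and "length r = length r'"
  shows "map fst r = map fst r'"
proof -
  obtain a r1 where r: "r = a # r1" using assms by (cases r) auto
  obtain a' r1' where r': "r' = a' # r1'" using assms by (cases r') auto
  have "map fst r1 = map fst r1'"
    using assms r r' by (intro copy_idx_inj[of _ N]) auto
  then show ?thesis using assms r r' by simp
qed

lemma mx_eq:
  assumes "hd (mdg_states N ((c,w) # r)) = hd (mdg_states N ((c',w') # r'))"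
    and "set (map fst r) \<subseteq> {1..N}" "set (map fst r') \<subseteq> {1..N}"
  shows "xidx w = xidx w' \<and> map fst r = map fst r'"
proof (cases "r = []")
  case True
  then show ?thesis using assms by (cases "r' = []") auto
next
  case False
  then have r': "r' \<noteq> []" using assms by (cases "r' = []") auto
  then show ?thesis using assms False tail_code_inj[of r N r'] by auto
qed

lemma mu_eq:
  assumes "mdg_input N (U l j) ((c,w) # r) = mdg_input N (U l' j') ((c',w') # r')"
    and "set (map fst r) \<subseteq> {1..N}" "set (map fst r') \<subseteq> {1..N}"
  shows "j = j' \<and> c = c' \<and> map fst r = map fst r'"
proof (cases "r = []")
  case True
  then show ?thesis using assms by (cases "r' = []") auto
next
  case False
  then have r': "r' \<noteq> []" using assms by (cases "r' = []") auto
  then show ?thesis using assms False tail_code_inj[of r N r'] by auto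
qed

lemma mdg_states_mem: "y \<in> set (mdg_states N es) \<Longrightarrow> \<exists>i < length es. y = hd (mdg_states N (drop i es))"
proof (induction N es rule: mdg_states.induct)
  case (1 N) then show ?case by simp
next
  case (2 N c w rest)
  show ?case
  proof (cases "y = hd (mdg_states N ((c, w) # rest))")
    case True then show ?thesis by (intro exI[of _ 0]) auto
  next
    case False
    then have "y \<in> set (mdg_states N rest)" using "2.prems" by simp
    then obtain i where "i < length rest" "y = hd (mdg_states N (drop i rest))" using "2.IH" by blast
    then show ?thesis by (intro exI[of _ "Suc i"]) auto
  qed
qed

lemma mdg_states_MX: "y \<in> set (mdg_states N es) \<Longrightarrow> \<exists>a b c d. y = MX a b c d"
  by (induction N es rule: mdg_states.induct) auto

lemma mdg_input_MU: "\<exists>a b c d e. mdg_input N s es = MU a b c d e"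
  by (induction N s es rule: mdg_input.induct) auto

lemma gc_walk_props:
  "is_walk (gc_E n N m A B) s es \<Longrightarrow> set (map fst es) \<subseteq> {1..N} \<and> (\<forall>z \<in> set (map snd es). \<exists>j. z = X j)"
  by (induction "gc_E n N m A B" s es rule: is_walk.induct) (auto simp: gc_E_def)

lemma gc_first: "(U l j, c, w) \<in> gc_E n N m A B \<Longrightarrow> c = l"
  by (auto simp: gc_E_def)

lemma overlap:
  assumes w1: "is_walk (gc_E n N m A B) s es" and s: "s \<in> Uset N m" and ne: "es \<noteq> []"
      and w2: "is_walk (gc_E n N m A B) s' es'" and s': "s' \<in> Uset N m" and ne': "es' \<noteq> []"
      and y1: "y \<in> set (mdg_path N (s, es))" and y2: "y \<in> set (mdg_path N (s', es'))"
  shows "\<exists>i i'. i \<le> length es \<and> i' \<le> length es' \<and> (s # map snd es) ! i = (s' # map snd es') ! i'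
           \<and> map fst (drop i es) = map fst (drop i' es')"
proof -
  have P1: "set (map fst es) \<subseteq> {1..N}" "\<forall>z \<in> set (map snd es). \<exists>j. z = X j"
    using gc_walk_props[OF w1] by auto
  have P2: "set (map fst es') \<subseteq> {1..N}" "\<forall>z \<in> set (map snd es'). \<exists>j. z = X j"
    using gc_walk_props[OF w2] by auto
  have c1: "y = mdg_input N s es \<or> y \<in> set (mdg_states N es)" using y1 by (simp add: mdg_path_def)
  have c2: "y = mdg_input N s' es' \<or> y \<in> set (mdg_states N es')" using y2 by (simp add: mdg_path_def)
  have noMix: "\<And>ss e1 e2. mdg_input N ss e1 \<notin> set (mdg_states N e2)"
  proof
    fix ss e1 e2 assume "mdg_input N ss e1 \<in> set (mdg_states N e2)"
    then obtain a b c d where "mdg_input N ss e1 = MX a b c d" using mdg_states_MX by blast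
    moreover obtain a' b' c' d' e' where "mdg_input N ss e1 = MU a' b' c' d' e'"
      using mdg_input_MU by blast
    ultimately show False by simp
  qed
  show ?thesis
  proof (cases "y = mdg_input N s es")
    case True
    then have yb: "y = mdg_input N s' es'" using c2 noMix by metis
    obtain l j where sl: "s = U l j" using s by (auto simp: Uset_def)
    obtain l' j' where sl': "s' = U l' j'" using s' by (auto simp: Uset_def)
    obtain c w r where es: "es = (c, w) # r" using ne by (cases es) auto
    obtain c' w' r' where es': "es' = (c', w') # r'" using ne' by (cases es') auto
    have cl: "c = l" using w1 sl es gc_first by auto
    have cl': "c' = l'" using w2 sl' es' gc_first by auto
    have "j = j' \<and> c = c' \<and> map fst r = map fst r'"
      using True yb sl sl' es es' P1 P2 by (intro mu_eq[of N l j c w r l' j' c' w' r']) auto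
    then have "s = s'" "map fst es = map fst es'" using sl sl' cl cl' es es' by auto
    then show ?thesis by (intro exI[of _ 0]) auto
  next
    case False
    then have ya: "y \<in> set (mdg_states N es)" using c1 by simp
    have yb: "y \<in> set (mdg_states N es')" using c2 ya noMix by metis
    obtain i where i: "i < length es" "y = hd (mdg_states N (drop i es))"
      using mdg_states_mem[OF ya] by blast
    obtain i' where i': "i' < length es'" "y = hd (mdg_states N (drop i' es'))"
      using mdg_states_mem[OF yb] by blast
    obtain c w where cw: "es ! i = (c, w)" by (cases "es ! i")
    obtain c' w' where cw': "es' ! i' = (c', w')" by (cases "es' ! i'")
    have d1: "drop i es = (c, w) # drop (Suc i) es" using i cw by (metis Cons_nth_drop_Suc)
    have d2: "drop i' es' = (c', w') # drop (Suc i') es'" using i' cw' by (metis Cons_nth_drop_Suc)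
    have s1: "set (map fst (drop (Suc i) es)) \<subseteq> {1..N}" using P1(1)
      by (metis drop_map order_trans set_drop_subset)
    have s2: "set (map fst (drop (Suc i') es')) \<subseteq> {1..N}" using P2(1)
      by (metis drop_map order_trans set_drop_subset)
    have eq: "xidx w = xidx w' \<and> map fst (drop (Suc i) es) = map fst (drop (Suc i') es')"
      using i i' d1 d2 s1 s2 by (intro mx_eq[of N c w _ c' w']) auto
    have wi: "w = snd (es ! i)" using cw by simp
    have wi': "w' = snd (es' ! i')" using cw' by simp
    have "w \<in> set (map snd es)" using wi i by auto
    then obtain jj where "w = X jj" using P1(2) by blast
    moreover have "w' \<in> set (map snd es')" using wi' i' by auto
    then obtain jj' where "w' = X jj'" using P2(2) by blast
    ultimately have "w = w'" using eq by simp
    then have "(s # map snd es) ! Suc i = (s' # map snd es') ! Suc i'"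
      using wi wi' i i' by simp
    then show ?thesis using eq i i' by (intro exI[of _ "Suc i"] exI[of _ "Suc i'"]) auto
  qed
qed



definition ine :: "cedge set \<Rightarrow> vert \<Rightarrow> cedge" where
  "ine Es x = (SOME e. e \<in> Es \<and> hd_of e = x)"
definition prd :: "cedge set \<Rightarrow> vert \<Rightarrow> vert" where "prd Es x = tl_of (ine Es x)"
definition pcol :: "cedge set \<Rightarrow> vert \<Rightarrow> nat" where "pcol Es x = col_of (ine Es x)"

lemma ine_eq: assumes "S_disjoint Es" "(a,c,b) \<in> Es" shows "ine Es b = (a,c,b)"
proof -
  have h: "(a,c,b) \<in> Es \<and> hd_of (a,c,b) = b" using assms by (simp add: hd_of_def)
  have uniq: "\<And>e. e \<in> Es \<and> hd_of e = b \<Longrightarrow> e = (a,c,b)"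
  proof (rule ccontr)
    fix e assume e: "e \<in> Es \<and> hd_of e = b" and ne: "e \<noteq> (a,c,b)"
    then have "hd_of e \<noteq> hd_of (a,c,b)" using assms unfolding S_disjoint_def by blast
    then show False using e by (simp add: hd_of_def)
  qed
  show ?thesis unfolding ine_def
    using someI2[of "\<lambda>e. e \<in> Es \<and> hd_of e = b" "(a,c,b)" "\<lambda>e. e = (a,c,b)"] h uniq by blast
qed

lemma ine_in: assumes "one_ingoing n Vs Es" "x \<in> Vs" "x \<in> Xset n"
  shows "ine Es x \<in> Es \<and> hd_of (ine Es x) = x"
proof -
  have "card {e\<in>Es. hd_of e = x} = 1" using assms unfolding one_ingoing_def by blast
  then have "{e\<in>Es. hd_of e = x} \<noteq> {}" by (metis card.empty zero_neq_one)
  then have "\<exists>e. e \<in> Es \<and> hd_of e = x" by blast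
  then show ?thesis unfolding ine_def by (rule someI_ex)
qed

lemma prd_edge: assumes "one_ingoing n Vs Es" "x \<in> Vs" "x \<in> Xset n"
  shows "(prd Es x, pcol Es x, x) \<in> Es"
proof -
  have h: "ine Es x \<in> Es" "hd_of (ine Es x) = x" using ine_in[OF assms] by auto
  have "(prd Es x, pcol Es x, x) = ine Es x" using h(2)
    unfolding prd_def pcol_def tl_of_def col_of_def hd_of_def by (metis prod.collapse)
  then show ?thesis using h by simp
qed

lemma walk_prd: "S_disjoint Es \<Longrightarrow> is_walk Es w r \<Longrightarrow> (prd Es ^^ length r) (last (w # map snd r)) = w"
proof (induction r arbitrary: w)
  case Nil then show ?case by simp
next
  case (Cons a r)
  obtain c w1 where a: "a = (c, w1)" by (cases a)
  have e: "(w, c, w1) \<in> Es" "is_walk Es w1 r" using Cons.prems a by auto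
  have ih: "(prd Es ^^ length r) (last (w1 # map snd r)) = w1" using Cons.IH[OF Cons.prems(1) e(2)] .
  have "(prd Es ^^ length (a # r)) (last (w # map snd (a # r)))
        = prd Es ((prd Es ^^ length r) (last (w1 # map snd r)))" using a by simp
  also have "\<dots> = prd Es w1" using ih by simp
  also have "\<dots> = w" using ine_eq[OF Cons.prems(1) e(1)] by (simp add: prd_def tl_of_def)
  finally show ?case .
qed

lemma sdisj_det: "S_disjoint Es \<Longrightarrow> (a,c,b) \<in> Es \<Longrightarrow> (a,c,b') \<in> Es \<Longrightarrow> b = b'"
  unfolding S_disjoint_def tl_of_def col_of_def hd_of_def by force

lemma finite_Xset: "finite (Xset n)"
proof -
  have "Xset n = X ` {1..n}" unfolding Xset_def by auto
  then show ?thesis by simp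
qed

lemma finite_Uset: "finite (Uset N m)"
proof -
  have "Uset N m \<subseteq> (\<lambda>(k,q). U k q) ` (SIGMA k:{1..N}. {1..m k})" unfolding Uset_def by auto
  moreover have "finite ((\<lambda>(k,q). U k q) ` (SIGMA k:{1..N}. {1..m k}))" by auto
  ultimately show ?thesis by (rule finite_subset)
qed

lemma finite_gcV: "finite (gc_V n N m)"
  unfolding gc_V_def using finite_Xset finite_Uset by simp

lemma XU_disj: "Xset n \<inter> Uset N m = {}"
  unfolding Xset_def Uset_def by auto

lemma stem_part:
  assumes st: "gen_stem n N m A B Vs Es" and XsV: "Xs \<subseteq> Vs" and XsX: "Xs \<subseteq> Xset n"
  shows "\<exists>P. gen_cactus_walking n N m A B P \<and> walk_head ` P = Xs"
proof -
  have sub: "is_subgraph (gc_V n N m) (gc_E n N m A B) Vs Es" and nocyc: "cycles Es = {}"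
    and oi: "one_ingoing n Vs Es" and sd: "S_disjoint Es"
    using st unfolding gen_stem_def by auto
  define S where "S = Vs \<inter> Xset n"
  define f where "f = prd Es"
  define c where "c = pcol Es"
  have VsV: "Vs \<subseteq> gc_V n N m" and EsE: "Es \<subseteq> gc_E n N m A B"
    and tlhd: "\<forall>e\<in>Es. tl_of e \<in> Vs \<and> hd_of e \<in> Vs"
    using sub unfolding is_subgraph_def by auto
  have finS: "finite S" unfolding S_def using VsV finite_gcV finite_subset by blast
  have hE: "\<And>y. y \<in> S \<Longrightarrow> (f y, c y, y) \<in> Es"
    unfolding S_def f_def c_def using prd_edge[OF oi] by blast
  have fV: "\<And>y. y \<in> S \<Longrightarrow> f y \<in> Vs" using hE tlhd by (force simp: tl_of_def)
  have exit: "\<And>x. x \<in> S \<Longrightarrow> \<exists>t. (f^^t) x \<notin> S"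
  proof (rule ccontr)
    fix x assume x: "x \<in> S" and nex: "\<not> (\<exists>t. (f^^t) x \<notin> S)"
    then have allS: "\<And>t. (f^^t) x \<in> S" by blast
    obtain a b where ab: "a < b" "b \<le> card S" "(f^^a) x = (f^^b) x"
      using pigeon[OF finS, of f x] allS by blast
    define z where "z = (f^^a) x"
    have "(f^^(b - a)) z = (f^^(b - a + a)) x" unfolding z_def by (simp add: funpow_add_apply)
    also have "\<dots> = z" using ab unfolding z_def by simp
    finally have per: "(f^^(b - a)) z = z" .
    have inS: "\<And>t. t < b - a \<Longrightarrow> (f^^t) z \<in> S"
      unfolding z_def using allS by (simp add: funpow_add_apply[symmetric])
    obtain C where "C \<in> cycles Es" using periodic_cycle[OF hE _ per inS] ab by auto
    then show False using nocyc by simp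
  qed
  define J where "J x = (LEAST t. (f^^t) x \<notin> S)" for x
  have J1: "\<And>x. x \<in> S \<Longrightarrow> (f^^(J x)) x \<notin> S" unfolding J_def using exit by (metis LeastI_ex)
  have J2: "\<And>x t. x \<in> S \<Longrightarrow> t < J x \<Longrightarrow> (f^^t) x \<in> S" unfolding J_def using not_less_Least by blast
  have J3: "\<And>x. x \<in> S \<Longrightarrow> 0 < J x" using J1 by (metis funpow_0 gr0I)
  have startU: "\<And>x. x \<in> S \<Longrightarrow> (f^^(J x)) x \<in> Uset N m"
  proof -
    fix x assume x: "x \<in> S"
    obtain j where j: "J x = Suc j" using J3[OF x] by (metis gr0_implies_Suc)
    have "(f^^j) x \<in> S" using J2[OF x] j by simp
    then have "(f^^(J x)) x \<in> Vs" using fV j by simp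
    then show "(f^^(J x)) x \<in> Uset N m" using J1[OF x] VsV unfolding S_def gc_V_def by auto
  qed
  define W where "W x = ((f^^(J x)) x, bw f c (J x) x)" for x
  have Wwalk: "\<And>x. x \<in> S \<Longrightarrow> is_walk Es (fst (W x)) (snd (W x))"
    unfolding W_def using bw_walk[of S f c Es] hE J2 by simp
  have Wne: "\<And>x. x \<in> S \<Longrightarrow> snd (W x) \<noteq> []" unfolding W_def using J3 bw_len
    by (metis length_0_conv less_not_refl2 snd_conv)
  have Wend: "\<And>x. last (fst (W x) # map snd (snd (W x))) = x" unfolding W_def using bw_endv by simp
  have Whead: "\<And>x. x \<in> S \<Longrightarrow> walk_head (W x) = x"
    unfolding walk_head_def using Wne Wend snd_last by metis
  have XsS: "Xs \<subseteq> S" unfolding S_def using XsV XsX by auto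
  have isw: "\<And>x. x \<in> S \<Longrightarrow> input_state_walk n N m A B (W x)"
  proof -
    fix x assume x: "x \<in> S"
    have "fst (W x) \<in> Uset N m" unfolding W_def using startU[OF x] by simp
    moreover have "is_walk (gc_E n N m A B) (fst (W x)) (snd (W x))"
      using Wwalk[OF x] EsE is_walk_mono by blast
    moreover have "snd (last (snd (W x))) \<in> Xset n"
      using Whead[OF x] x unfolding walk_head_def S_def by simp
    ultimately show "input_state_walk n N m A B (W x)"
      unfolding input_state_walk_def using Wne[OF x] by simp
  qed
  define P where "P = W ` Xs"
  have finXs: "finite Xs" using XsX finite_Xset finite_subset by blast
  have disj: "\<And>x y. x \<in> Xs \<Longrightarrow> y \<in> Xs \<Longrightarrow> W x \<noteq> W y \<Longrightarrow>
        set (mdg_path N (W x)) \<inter> set (mdg_path N (W y)) = {}"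
  proof (rule ccontr)
    fix x y assume x: "x \<in> Xs" and y: "y \<in> Xs" and ne: "W x \<noteq> W y"
      and ov: "set (mdg_path N (W x)) \<inter> set (mdg_path N (W y)) \<noteq> {}"
    have xS: "x \<in> S" and yS: "y \<in> S" using x y XsS by auto
    obtain y0 where y0: "y0 \<in> set (mdg_path N (W x))" "y0 \<in> set (mdg_path N (W y))" using ov by blast
    obtain s1 es1 where W1: "W x = (s1, es1)" by (cases "W x")
    obtain s2 es2 where W2: "W y = (s2, es2)" by (cases "W y")
    have iw1: "input_state_walk n N m A B (s1, es1)" using isw[OF xS] W1 by simp
    have iw2: "input_state_walk n N m A B (s2, es2)" using isw[OF yS] W2 by simp
    obtain i i' where ii: "i \<le> length es1" "i' \<le> length es2"
      "(s1 # map snd es1) ! i = (s2 # map snd es2) ! i'" "map fst (drop i es1) = map fst (drop i' es2)"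
      using overlap[of n N m A B s1 es1 s2 es2 y0] iw1 iw2 y0 W1 W2
      unfolding input_state_walk_def by auto
    let ?w = "(s1 # map snd es1) ! i"
    have e1: "is_walk Es ?w (drop i es1)" using walk_drop[OF _ ii(1)] Wwalk[OF xS] W1 by simp
    have e2: "is_walk Es ?w (drop i' es2)" using walk_drop[OF _ ii(2)] Wwalk[OF yS] W2 ii(3) by simp
    have "drop i es1 = drop i' es2"
      using det_walk[OF _ e1 e2 ii(4)] sdisj_det[OF sd] by blast
    then have "last (s1 # map snd es1) = last (s2 # map snd es2)"
      using last_drop[OF ii(1), of s1] last_drop[OF ii(2), of s2] ii(3) by simp
    then have "x = y" using Wend[of x] Wend[of y] W1 W2 by simp
    then show False using ne by simp
  qed
  have "gen_cactus_walking n N m A B P"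
    unfolding gen_cactus_walking_def P_def using finXs isw XsS disj by auto
  moreover have "walk_head ` P = Xs"
  proof -
    have "walk_head ` P = (\<lambda>x. walk_head (W x)) ` Xs" unfolding P_def by (simp add: image_image)
    also have "\<dots> = (\<lambda>x. x) ` Xs" using Whead XsS by (intro image_cong) auto
    finally show ?thesis by simp
  qed
  ultimately show ?thesis by blast
qed



lemma bud_part:
  assumes bd: "gen_bud n N m A B Vs Es" and XsV: "Xs \<subseteq> Vs" and XsX: "Xs \<subseteq> Xset n"
  shows "\<exists>P. gen_cactus_walking n N m A B P \<and> walk_head ` P = Xs \<and> (\<forall>p\<in>P. walk_len p \<ge> M)"
proof (cases "Xs = {}")
  case True
  then show ?thesis by (intro exI[of _ "{}"]) (simp add: gen_cactus_walking_def)
next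
  case False
  have sub: "is_subgraph (gc_V n N m) (gc_E n N m A B) Vs Es" and noU: "Vs \<inter> Uset N m = {}"
    and uc: "\<exists>!C. C \<in> cycles Es" and reach: "\<forall>x\<in>Vs \<inter> Xset n. input_reachable n N m A B x"
    and oi: "one_ingoing n Vs Es" and sd: "S_disjoint Es"
    using bd unfolding gen_bud_def by auto
  define f where "f = prd Es"
  define c where "c = pcol Es"
  have VsV: "Vs \<subseteq> gc_V n N m" and EsE: "Es \<subseteq> gc_E n N m A B"
    and tlhd: "\<forall>e\<in>Es. tl_of e \<in> Vs \<and> hd_of e \<in> Vs"
    using sub unfolding is_subgraph_def by auto
  have VsX: "Vs \<subseteq> Xset n" using VsV noU unfolding gc_V_def by auto
  have finV: "finite Vs" using VsV finite_gcV finite_subset by blast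
  have hE: "\<And>y. y \<in> Vs \<Longrightarrow> (f y, c y, y) \<in> Es"
    unfolding f_def c_def using prd_edge[OF oi] VsX by blast
  have fV: "\<And>y. y \<in> Vs \<Longrightarrow> f y \<in> Vs" using hE tlhd by (force simp: tl_of_def)
  have fpV: "\<And>y t. y \<in> Vs \<Longrightarrow> (f^^t) y \<in> Vs"
  proof -
    fix y t assume "y \<in> Vs" then show "(f^^t) y \<in> Vs" by (induction t) (auto intro: fV)
  qed
  define Z where "Z = {z \<in> Vs. \<exists>p>0. (f^^p) z = z}"
  have intoZ: "\<And>x r. x \<in> Vs \<Longrightarrow> card Vs \<le> r \<Longrightarrow> (f^^r) x \<in> Z"
  proof -
    fix x r assume x: "x \<in> Vs" and r: "card Vs \<le> r"
    obtain a b where ab: "a < b" "b \<le> card Vs" "(f^^a) x = (f^^b) x"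
      using pigeon[OF finV, of f x] fpV[OF x] by blast
    define z where "z = (f^^a) x"
    have "(f^^(b - a)) z = (f^^(b - a + a)) x" unfolding z_def by (simp add: funpow_add_apply)
    also have "\<dots> = z" using ab unfolding z_def by simp
    finally have per: "(f^^(b - a)) z = z" .
    have rx0: "(f^^(r - a)) z = (f^^(r - a + a)) x" unfolding z_def by (rule funpow_add_apply[symmetric])
    have "r - a + a = r" using ab(1,2) r by simp
    then have rx: "(f^^r) x = (f^^(r - a)) z" using rx0 by simp
    have "(f^^(b - a)) ((f^^(r - a)) z) = (f^^(r - a)) z" using per funpow_comm[where f=f and a="b - a" and b="r - a" and x=z] by simp
    moreover have "(f^^(r - a)) z \<in> Vs" unfolding z_def using fpV x by simp
    ultimately have "(f^^(r - a)) z \<in> Z" unfolding Z_def using ab(1)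
      by (intro CollectI conjI exI[of _ "b - a"]) auto
    then show "(f^^r) x \<in> Z" using rx by simp
  qed
  have orbit: "\<And>z1 z2. z1 \<in> Z \<Longrightarrow> z2 \<in> Z \<Longrightarrow> \<exists>t. (f^^t) z1 = z2"
  proof -
    fix z1 z2 assume z1: "z1 \<in> Z" and z2: "z2 \<in> Z"
    obtain p1 where p1: "0 < p1" "(f^^p1) z1 = z1" "z1 \<in> Vs" using z1 unfolding Z_def by auto
    obtain p2 where p2: "0 < p2" "(f^^p2) z2 = z2" "z2 \<in> Vs" using z2 unfolding Z_def by auto
    obtain C1 where C1: "C1 \<in> cycles Es" "\<forall>e\<in>C1. \<exists>t<p1. hd_of e = (f^^t) z1"
      using periodic_cycle[OF hE p1(1,2)] fpV p1(3) by blast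
    obtain C2 where C2: "C2 \<in> cycles Es" "(f z2, c z2, z2) \<in> C2"
      using periodic_cycle[OF hE p2(1,2)] fpV p2(3) by blast
    have "C1 = C2" using uc C1(1) C2(1) by blast
    then obtain t where "hd_of (f z2, c z2, z2) = (f^^t) z1" using C1 C2 by blast
    then show "\<exists>t. (f^^t) z1 = z2" by (auto simp: hd_of_def)
  qed
  obtain x0 where x0: "x0 \<in> Xs" using False by blast
  define z0 where "z0 = (f^^(card Vs)) x0"
  have z0Z: "z0 \<in> Z" unfolding z0_def using intoZ x0 XsV by blast
  have "z0 \<in> Vs \<inter> Xset n" using z0Z VsX unfolding Z_def by auto
  then obtain u es0 where u: "u \<in> Uset N m" and es0ne: "es0 \<noteq> []"
    and es0p: "is_path (gc_E n N m A B) u es0" and es0l: "snd (last es0) = z0"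
    using reach unfolding input_reachable_def by blast
  define k where "k = (LEAST k. k < length es0 \<and> snd (es0 ! k) \<in> Z)"
  have ex: "length es0 - 1 < length es0 \<and> snd (es0 ! (length es0 - 1)) \<in> Z"
    using es0ne es0l z0Z by (simp add: last_conv_nth)
  have kp: "k < length es0 \<and> snd (es0 ! k) \<in> Z" unfolding k_def
    by (rule LeastI[where P="\<lambda>k. k < length es0 \<and> snd (es0 ! k) \<in> Z", OF ex])
  have kmin: "\<And>j. j < k \<Longrightarrow> snd (es0 ! j) \<notin> Z"
  proof -
    fix j assume j: "j < k"
    then have "\<not> (j < length es0 \<and> snd (es0 ! j) \<in> Z)" unfolding k_def by (rule not_less_Least)
    then show "snd (es0 ! j) \<notin> Z" using j kp by auto
  qed
  define v where "v = snd (es0 ! k)"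
  have vZ: "v \<in> Z" using kp v_def by simp
  define P0 where "P0 = take k es0 @ [es0 ! k]"
  define Bl where "Bl = u # map snd (take k es0)"
  have P0t: "P0 = take (Suc k) es0" unfolding P0_def using kp by (simp add: take_Suc_conv_app_nth)
  have P0w: "is_walk (gc_E n N m A B) u P0"
    unfolding P0t using es0p walk_take unfolding is_path_def by blast
  have BlP0: "u # map snd P0 = Bl @ [v]" unfolding P0_def Bl_def v_def by simp
  have dist: "distinct (Bl @ [v])"
  proof -
    have "u # map snd P0 = take (Suc (Suc k)) (u # map snd es0)" unfolding P0t by (simp add: take_map)
    then show ?thesis using es0p BlP0 unfolding is_path_def by (metis distinct_take)
  qed
  have lenBl: "length Bl = Suc k" unfolding Bl_def using kp by simp
  have lenP0: "length P0 = Suc k" unfolding P0t using kp by simp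
  have lastP0: "last (u # map snd P0) = v" using BlP0 by simp
  have BlZ: "\<And>i. i < Suc k \<Longrightarrow> Bl ! i \<notin> Z"
  proof -
    fix i assume i: "i < Suc k"
    show "Bl ! i \<notin> Z"
    proof (cases i)
      case 0
      then have "Bl ! i = u" unfolding Bl_def by simp
      then show ?thesis using u noU unfolding Z_def by auto
    next
      case (Suc j)
      then have "Bl ! i = snd (es0 ! j)" unfolding Bl_def using i kp by simp
      then show ?thesis using kmin[of j] Suc i by simp
    qed
  qed
  define K where "K = card Vs + M + 1"
  define L where "L x = (SOME l. K \<le> l \<and> (f^^l) x = v)" for x
  have Lx: "\<And>x. x \<in> Vs \<Longrightarrow> K \<le> L x \<and> (f^^(L x)) x = v"
  proof -
    fix x assume x: "x \<in> Vs"
    have "(f^^K) x \<in> Z" using intoZ[OF x, of K] unfolding K_def by linarith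
    then obtain t where t: "(f^^t) ((f^^K) x) = v" using orbit vZ by blast
    then have "K \<le> t + K \<and> (f^^(t + K)) x = v" by (simp add: funpow_add_apply)
    then have "\<exists>l. K \<le> l \<and> (f^^l) x = v" by blast
    then show "K \<le> L x \<and> (f^^(L x)) x = v" unfolding L_def by (rule someI_ex)
  qed
  define E where "E x = bw f c (L x) x" for x
  have Ew: "\<And>x. x \<in> Vs \<Longrightarrow> is_walk Es v (E x)"
  proof -
    fix x assume x: "x \<in> Vs"
    have "is_walk Es ((f^^(L x)) x) (E x)" unfolding E_def
      by (rule bw_walk[of Vs f c Es]) (use hE fpV x in auto)
    then show "is_walk Es v (E x)" using Lx[OF x] by simp
  qed
  have Eend: "\<And>x. x \<in> Vs \<Longrightarrow> last (v # map snd (E x)) = x"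
    unfolding E_def using Lx bw_endv by metis
  have Elen: "\<And>x. length (E x) = L x" unfolding E_def by (simp add: bw_len)
  define W where "W x = (u, P0 @ E x)" for x
  have Wv: "\<And>x. u # map snd (P0 @ E x) = Bl @ v # map snd (E x)" using BlP0 by simp
  have Wwalk: "\<And>x. x \<in> Vs \<Longrightarrow> is_walk (gc_E n N m A B) u (P0 @ E x)"
    unfolding is_walk_append using P0w Ew lastP0 EsE is_walk_mono by metis
  have Wne: "\<And>x. P0 @ E x \<noteq> []" using lenP0 by auto
  have Whead: "\<And>x. x \<in> Vs \<Longrightarrow> walk_head (W x) = x"
  proof -
    fix x assume x: "x \<in> Vs"
    have "walk_head (W x) = last (u # map snd (P0 @ E x))"
      unfolding walk_head_def W_def using snd_last[OF Wne] by simp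
    also have "\<dots> = last (v # map snd (E x))" unfolding Wv by simp
    finally show "walk_head (W x) = x" using Eend[OF x] by simp
  qed
  have isw: "\<And>x. x \<in> Xs \<Longrightarrow> input_state_walk n N m A B (W x)"
  proof -
    fix x assume x: "x \<in> Xs"
    then have xV: "x \<in> Vs" using XsV by auto
    have "snd (last (snd (W x))) \<in> Xset n" using Whead[OF xV] x XsX unfolding walk_head_def by auto
    then show "input_state_walk n N m A B (W x)"
      unfolding input_state_walk_def W_def using u Wne Wwalk[OF xV] by simp
  qed
  have Wlen: "\<And>x. x \<in> Xs \<Longrightarrow> M \<le> walk_len (W x)"
    unfolding walk_len_def W_def using Lx XsV Elen lenP0 unfolding K_def by fastforce
  have nth_hi: "\<And>x i. Suc k \<le> i \<Longrightarrow> (Bl @ v # map snd (E x)) ! i = (v # map snd (E x)) ! (i - Suc k)"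
    using lenBl by (simp add: nth_append)
  have nth_lo: "\<And>x i. i < Suc k \<Longrightarrow> (Bl @ v # map snd (E x)) ! i = Bl ! i"
    using lenBl by (simp add: nth_append)
  have drop_hi: "\<And>x i. Suc k \<le> i \<Longrightarrow> drop i (P0 @ E x) = drop (i - Suc k) (E x)"
    using lenP0 by simp
  have drop_lo: "\<And>x i. i \<le> Suc k \<Longrightarrow> drop i (P0 @ E x) = drop i P0 @ E x"
    using lenP0 by simp
  have mixed: "\<And>x y i i'. x \<in> Xs \<Longrightarrow> y \<in> Xs \<Longrightarrow> i < Suc k \<Longrightarrow> Suc k \<le> i' \<Longrightarrow>
      i' \<le> length (P0 @ E y) \<Longrightarrow> (Bl @ v # map snd (E x)) ! i = (Bl @ v # map snd (E y)) ! i' \<Longrightarrow>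
      map fst (drop i (P0 @ E x)) = map fst (drop i' (P0 @ E y)) \<Longrightarrow> False"
  proof -
    fix x y i i' assume x: "x \<in> Xs" and y: "y \<in> Xs" and i: "i < Suc k" and i': "Suc k \<le> i'"
      and i'l: "i' \<le> length (P0 @ E y)"
      and eqv: "(Bl @ v # map snd (E x)) ! i = (Bl @ v # map snd (E y)) ! i'"
      and eqc: "map fst (drop i (P0 @ E x)) = map fst (drop i' (P0 @ E y))"
    have xV: "x \<in> Vs" and yV: "y \<in> Vs" using x y XsV by auto
    define j where "j = i' - Suc k"
    define w where "w = (v # map snd (E y)) ! j"
    have jl: "j \<le> length (E y)" unfolding j_def using i'l lenP0 by simp
    have ww: "is_walk Es w (drop j (E y))" unfolding w_def using walk_drop[OF Ew[OF yV] jl] .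
    have wl: "last (w # map snd (drop j (E y))) = y"
      unfolding w_def using last_drop[OF jl, of v] Eend[OF yV] by simp
    have fw: "(f^^(length (drop j (E y)))) y = w" using walk_prd[OF sd ww] wl unfolding f_def by simp
    have "length (drop i (P0 @ E x)) = length (drop i' (P0 @ E y))"
      using eqc by (metis length_map)
    then have ld: "length (drop j (E y)) = Suc k + L x - i"
      using drop_hi[OF i', of y] drop_lo[of i x] i lenP0 Elen unfolding j_def by simp
    have "K \<le> L x" using Lx[OF xV] by simp
    then have "card Vs \<le> length (drop j (E y))" using i ld unfolding K_def by linarith
    then have "w \<in> Z" using intoZ[OF yV] fw by metis
    moreover have "w = Bl ! i" unfolding w_def j_def using eqv nth_lo[OF i] nth_hi[OF i'] by metis
    ultimately show False using BlZ[OF i] by simp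
  qed
  define P where "P = W ` Xs"
  have finXs: "finite Xs" using XsX finite_Xset finite_subset by blast
  have disj: "\<And>x y. x \<in> Xs \<Longrightarrow> y \<in> Xs \<Longrightarrow> W x \<noteq> W y \<Longrightarrow>
        set (mdg_path N (W x)) \<inter> set (mdg_path N (W y)) = {}"
  proof (rule ccontr)
    fix x y assume x: "x \<in> Xs" and y: "y \<in> Xs" and ne: "W x \<noteq> W y"
      and ov: "set (mdg_path N (W x)) \<inter> set (mdg_path N (W y)) \<noteq> {}"
    have xV: "x \<in> Vs" and yV: "y \<in> Vs" using x y XsV by auto
    obtain y0 where y0: "y0 \<in> set (mdg_path N (u, P0 @ E x))" "y0 \<in> set (mdg_path N (u, P0 @ E y))"
      using ov unfolding W_def by blast
    obtain i i' where ii: "i \<le> length (P0 @ E x)" "i' \<le> length (P0 @ E y)"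
      "(u # map snd (P0 @ E x)) ! i = (u # map snd (P0 @ E y)) ! i'"
      "map fst (drop i (P0 @ E x)) = map fst (drop i' (P0 @ E y))"
      using overlap[OF Wwalk[OF xV] u Wne Wwalk[OF yV] u Wne y0] by blast
    have eqv: "(Bl @ v # map snd (E x)) ! i = (Bl @ v # map snd (E y)) ! i'" using ii(3) Wv by metis
    have "x = y"
    proof (cases "i < Suc k")
      case True
      note iT = True
      show ?thesis
      proof (cases "i' < Suc k")
        case True
        have "Bl ! i = Bl ! i'" using eqv nth_lo[OF iT] nth_lo[OF True] by metis
        moreover have "distinct Bl" using dist by simp
        ultimately have "i = i'" using iT True lenBl nth_eq_iff_index_eq by metis
        then have "map fst (drop i P0 @ E x) = map fst (drop i P0 @ E y)"
          using ii(4) drop_lo[of i] iT by simp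
        then have "map fst (E x) = map fst (E y)" by simp
        then have "E x = E y" using det_walk[OF _ Ew[OF xV] Ew[OF yV]] sdisj_det[OF sd] by blast
        then show ?thesis using Eend[OF xV] Eend[OF yV] by simp
      next
        case False
        then show ?thesis using mixed[OF x y iT _ ii(2) eqv ii(4)] by simp
      qed
    next
      case False
      note iF = False
      show ?thesis
      proof (cases "i' < Suc k")
        case True
        then show ?thesis using mixed[OF y x True _ ii(1) eqv[symmetric] ii(4)[symmetric]] iF by simp
      next
        case False
        have hi: "Suc k \<le> i" "Suc k \<le> i'" using iF False by auto
        define w where "w = (v # map snd (E x)) ! (i - Suc k)"
        have w2: "w = (v # map snd (E y)) ! (i' - Suc k)"
          unfolding w_def using eqv nth_hi[OF hi(1)] nth_hi[OF hi(2)] by metis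
        have jl1: "i - Suc k \<le> length (E x)" using ii(1) lenP0 by simp
        have jl2: "i' - Suc k \<le> length (E y)" using ii(2) lenP0 by simp
        have e1: "is_walk Es w (drop (i - Suc k) (E x))" unfolding w_def using walk_drop[OF Ew[OF xV] jl1] .
        have e2: "is_walk Es w (drop (i' - Suc k) (E y))" unfolding w2 using walk_drop[OF Ew[OF yV] jl2] .
        have "map fst (drop (i - Suc k) (E x)) = map fst (drop (i' - Suc k) (E y))"
          using ii(4) drop_hi[OF hi(1)] drop_hi[OF hi(2)] by metis
        then have "drop (i - Suc k) (E x) = drop (i' - Suc k) (E y)"
          using det_walk[OF _ e1 e2] sdisj_det[OF sd] by blast
        note D = this
        have l1: "last (w # map snd (drop (i - Suc k) (E x))) = x"
          unfolding w_def using last_drop[OF jl1, of v] Eend[OF xV] by (rule trans)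
        have l2: "last (w # map snd (drop (i' - Suc k) (E y))) = y"
          unfolding w2 using last_drop[OF jl2, of v] Eend[OF yV] by (rule trans)
        show ?thesis using l1 l2 D by metis
      qed
    qed
    then show False using ne by simp
  qed
  have "gen_cactus_walking n N m A B P"
    unfolding gen_cactus_walking_def P_def using finXs isw disj by auto
  moreover have "walk_head ` P = Xs"
  proof -
    have "walk_head ` P = (\<lambda>x. walk_head (W x)) ` Xs" unfolding P_def by (simp add: image_image)
    also have "\<dots> = (\<lambda>x. x) ` Xs" using Whead XsV by (intro image_cong) auto
    finally show ?thesis by simp
  qed
  moreover have "\<forall>p\<in>P. walk_len p \<ge> M" unfolding P_def using Wlen by auto
  ultimately show ?thesis by blast
qed


theorem proposition2:
  fixes n N :: nat and m :: "nat \<Rightarrow> nat"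
    and A B :: "nat \<Rightarrow> nat \<Rightarrow> nat \<Rightarrow> real"
    and Xs :: "vert set"
  assumes "Xs \<subseteq> Xset n"
  shows "((\<exists>Vs Es. gen_stem n N m A B Vs Es \<and> Xs \<subseteq> Vs) \<longrightarrow>
            (\<exists>P. gen_cactus_walking n N m A B P \<and> walk_head ` P = Xs))
       \<and> ((\<exists>Vs Es. gen_bud n N m A B Vs Es \<and> Xs \<subseteq> Vs) \<longrightarrow>
            (\<exists>P. gen_cactus_walking n N m A B P \<and> walk_head ` P = Xs)
            \<and> (\<forall>M::nat. \<exists>P. gen_cactus_walking n N m A B P \<and> walk_head ` P = Xs
                            \<and> (\<forall>p\<in>P. walk_len p \<ge> M)))"
proof (intro conjI impI allI)
  assume "\<exists>Vs Es. gen_stem n N m A B Vs Es \<and> Xs \<subseteq> Vs"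
  then obtain Vs Es where h: "gen_stem n N m A B Vs Es" "Xs \<subseteq> Vs" by blast
  show "\<exists>P. gen_cactus_walking n N m A B P \<and> walk_head ` P = Xs"
    by (rule stem_part[OF h assms])
next
  assume "\<exists>Vs Es. gen_bud n N m A B Vs Es \<and> Xs \<subseteq> Vs"
  then obtain Vs Es where h: "gen_bud n N m A B Vs Es" "Xs \<subseteq> Vs" by blast
  obtain P where "gen_cactus_walking n N m A B P \<and> walk_head ` P = Xs"
    using bud_part[OF h assms, of 0] by blast
  then show "\<exists>P. gen_cactus_walking n N m A B P \<and> walk_head ` P = Xs" by (rule exI)
next
  fix M :: nat
  assume "\<exists>Vs Es. gen_bud n N m A B Vs Es \<and> Xs \<subseteq> Vs"
  then obtain Vs Es where h: "gen_bud n N m A B Vs Es" "Xs \<subseteq> Vs" by blast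
  show "\<exists>P. gen_cactus_walking n N m A B P \<and> walk_head ` P = Xs \<and> (\<forall>p\<in>P. walk_len p \<ge> M)"
    by (rule bud_part[OF h assms])
qed

end
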